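(* Consider $n\ge 3$ agents with additive, identical, normalized valuations, and online algorithms without access to predictions. For any given $a\in(0,1]$, there is no online algorithm that guarantees an $a$-EFX allocation, even if the time horizon $T$ is known to the algorithm in advance.
   Context: Online fair division model: there is a set $N=[n]$ of agents and goods $g_1,\dots,g_T$ arriving one per time step. Each agent $i$ has an additive normalized valuation $v_i$ ($v_i(g_t)\ge0$, $\sum_{t=1}^T v_i(g_t)=1$, $v_i(S)=\sum_{g\in S}v_i(g)$); identical valuations means $v_i=v$ for all $i$. When $g_t$ arrives, its true values are revealed and it must be immediately and irrevocably allocated to one agent. For a bundle $S\ne\emptyset$ and valuation $f$, $\bar S^f=S\setminus\{g\}$ with $g\in\arg\max_{g'\in S}f(S\setminus\{g'\})$, and $\bar\emptyset^f=\emptyset$. For $a\in[0,1]$, an allocation $(A_1,\dots,A_n)$ is $a$-EFX if $v_i(A_i)\ge a\cdot v_i(\bar{A_j}^{v_i})$ for all $i,j$. An algorithm guarantees an $a$-EFX allocation if for every admissible input the final allocation is $a$-EFX with respect to the true valuations. *)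

theory Defs
  imports Main "HOL.Real"
begin

text \<open>Identical valuations: an input of horizon T is the list vs of values v(g_1),...,v(g_T);
  good g_{t+1} is indexed by t < T. Agents are 0..n-1.\<close>

definition admissible_input :: "nat \<Rightarrow> real list \<Rightarrow> bool" where
  "admissible_input T vs \<longleftrightarrow> length vs = T \<and> (\<forall>x\<in>set vs. x \<ge> 0) \<and> sum_list vs = 1"

text \<open>A deterministic online algorithm that knows T: alg T xs is the agent receiving the
  current good, where xs is the list of values revealed so far (current good last).\<close>

definition valid_online_alg :: "nat \<Rightarrow> (nat \<Rightarrow> real list \<Rightarrow> nat) \<Rightarrow> bool" where
  "valid_online_alg n alg \<longleftrightarrow>
     (\<forall>T xs. 1 \<le> length xs \<and> length xs \<le> T \<longrightarrow> alg T xs < n)"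

definition online_alloc :: "(nat \<Rightarrow> real list \<Rightarrow> nat) \<Rightarrow> nat \<Rightarrow> real list \<Rightarrow> nat \<Rightarrow> nat set" where
  "online_alloc alg T vs i = {t. t < T \<and> alg T (take (Suc t) vs) = i}"

definition bundle_val :: "real list \<Rightarrow> nat set \<Rightarrow> real" where
  "bundle_val vs S = (\<Sum>t\<in>S. vs ! t)"

definition efx_bar_val :: "real list \<Rightarrow> nat set \<Rightarrow> real" where
  "efx_bar_val vs S = (if S = {} then 0 else Max ((\<lambda>g. bundle_val vs (S - {g})) ` S))"

definition is_a_EFX :: "nat \<Rightarrow> real \<Rightarrow> real list \<Rightarrow> (nat \<Rightarrow> nat set) \<Rightarrow> bool" where
  "is_a_EFX n a vs A \<longleftrightarrow>
     (\<forall>i<n. \<forall>j<n. bundle_val vs (A i) \<ge> a * efx_bar_val vs (A j))"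

end

theory Submission
  imports Defs
begin

lemma bar_ge:
  assumes "finite S" "g \<in> S"
  shows "bundle_val vs (S - {g}) \<le> efx_bar_val vs S"
  using assms unfolding efx_bar_val_def by (auto intro!: Max_ge)

lemma bv_ge:
  assumes "finite S" "x \<in> S" "\<forall>t\<in>S. vs ! t \<ge> 0"
  shows "vs ! x \<le> bundle_val vs S"
  using assms unfolding bundle_val_def by (intro member_le_sum) auto

lemma bv_nonneg:
  assumes "\<forall>t\<in>S. vs ! t \<ge> 0"
  shows "0 \<le> bundle_val vs S"
  using assms unfolding bundle_val_def by (simp add: sum_nonneg)

theorem theorem3p3:
  fixes n :: nat and a :: real and alg :: "nat \<Rightarrow> real list \<Rightarrow> nat"
  assumes "n \<ge> 3" and "0 < a" and "a \<le> 1"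
    and "valid_online_alg n alg"
  shows "\<exists>T vs. admissible_input T vs \<and> \<not> is_a_EFX n a vs (online_alloc alg T vs)"
proof -
  define w where "w t = (a / (4 * real n)) * (a / 2) ^ (n - t)" for t
  define f where "f t = alg (Suc n) (map w [0..<Suc t])" for t
  define C where "C = {t. t < n \<and> (\<exists>s<t. f s = f t)}"
  define \<tau> where "\<tau> = (if C = {} then n else Least (\<lambda>t. t \<in> C))"
  define g where "g t = (if t \<le> \<tau> then w t else 0)" for t
  define S where "S = sum g {..<n}"
  define vs where "vs = map g [0..<n] @ [1 - S]"
  define A where "A = online_alloc alg (Suc n) vs"
  have npos: "real n > 0" using assms(1) by simp
  have w_pos: "w t > 0" for t using assms(2) npos unfolding w_def by simp
  have w_le: "w t \<le> a / (4 * real n)" for t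
  proof -
    have "(a/2) ^ (n - t) \<le> 1" using assms(2,3) by (simp add: power_le_one)
    then have "a * (a/2) ^ (n - t) \<le> a" using assms(2) by (simp add: mult_left_le)
    then show ?thesis unfolding w_def using npos
      by (simp add: divide_right_mono)
  qed
  have w_lt: "w s < a * w t" if "s < t" "t \<le> n" for s t
  proof -
    have e: "(a/2) ^ (n - s) = (a/2) ^ (n - t) * (a/2) ^ (t - s)"
      using that by (simp add: power_add[symmetric])
    have "(a/2) ^ (t - s) \<le> (a/2) ^ 1" using that assms(2,3)
      by (intro power_decreasing) auto
    hence "(a/2) ^ (t - s) \<le> a/2" by simp
    hence "(a/2) ^ (n - t) * (a/2) ^ (t - s) \<le> (a/2) ^ (n - t) * (a/2)"
      using assms(2) by (intro mult_left_mono) auto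
    hence "(a / (4 * real n)) * ((a/2) ^ (n - t) * (a/2) ^ (t - s)) \<le> (a / (4 * real n)) * ((a/2) ^ (n - t) * (a/2))"
      using assms(2) by (intro mult_left_mono) auto
    hence "w s \<le> w t * (a/2)" unfolding w_def e by (simp add: mult.assoc)
    also have "\<dots> < a * w t" using w_pos[of t] assms(2) by simp
    finally show ?thesis .
  qed
  have g_nn: "g t \<ge> 0" for t using w_pos unfolding g_def by (simp add: less_imp_le)
  have S_le: "S \<le> a / 4"
  proof -
    have "S \<le> sum (\<lambda>_. a / (4 * real n)) {..<n}" unfolding S_def
      by (rule sum_mono) (use assms(2) npos in \<open>auto simp: g_def intro: w_le\<close>)
    also have "\<dots> = a / 4" using npos by simp
    finally show ?thesis .
  qed
  have S_nn: "S \<ge> 0" unfolding S_def using g_nn by (simp add: sum_nonneg)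
  have len: "length vs = Suc n" unfolding vs_def by simp
  have vs_lt: "vs ! t = g t" if "t < n" for t unfolding vs_def using that by (simp add: nth_append)
  have vs_n: "vs ! n = 1 - S" unfolding vs_def by (simp add: nth_append)
  have vs_nn: "vs ! t \<ge> 0" if tt: "t < Suc n" for t
  proof (cases "t < n")
    case True then show ?thesis using vs_lt g_nn by simp
  next
    case False
    then have "t = n" using tt by simp
    then show ?thesis using vs_n S_le assms(3) by simp
  qed
  have adm: "admissible_input (Suc n) vs"
    unfolding admissible_input_def
  proof (intro conjI)
    show "length vs = Suc n" by (rule len)
    show "\<forall>x\<in>set vs. 0 \<le> x" using vs_nn len by (metis in_set_conv_nth)
    have "sum_list (map g [0..<n]) = S" unfolding S_def
      by (simp add: sum_list_sum_nth atLeast0LessThan)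
    then show "sum_list vs = 1" unfolding vs_def by simp
  qed
  have take_eq: "take (Suc t) vs = map w [0..<Suc t]" if "t < n" "t \<le> \<tau>" for t
  proof -
    have "take (Suc t) vs = map g [0..<Suc t]" unfolding vs_def using that
      by (simp add: take_map)
    also have "\<dots> = map w [0..<Suc t]" using that by (auto simp: g_def)
    finally show ?thesis .
  qed
  define own where "own t = alg (Suc n) (take (Suc t) vs)" for t
  have own_f: "own t = f t" if "t < n" "t \<le> \<tau>" for t
    unfolding own_def f_def using take_eq[OF that] by simp
  have own_lt: "own t < n" if "t \<le> n" for t
    using assms(4) that len unfolding valid_online_alg_def own_def by simp
  have A_eq: "A i = {t. t < Suc n \<and> own t = i}" for i
    unfolding A_def online_alloc_def own_def by simp
  have finA: "finite (A i)" for i unfolding A_eq by simp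
  define p where "p = own n"
  have p_lt: "p < n" unfolding p_def using own_lt by simp
  have nA: "n \<in> A p" unfolding A_eq p_def by simp
  have allnn: "\<forall>t\<in>A i. vs ! t \<ge> 0" for i using vs_nn unfolding A_eq by simp
  have allnn2: "\<forall>t\<in>A i - {x}. vs ! t \<ge> 0" for i x using allnn[of i] by blast
  show ?thesis
  proof (intro exI conjI)
    show "admissible_input (Suc n) vs" by (rule adm)
    show "\<not> is_a_EFX n a vs (online_alloc alg (Suc n) vs)"
    proof (cases "\<exists>t<n. own t = p")
      case True
      then obtain t where t: "t < n" "own t = p" by blast
      have tA: "t \<in> A p" using t unfolding A_eq by simp
      have "vs ! n \<le> bundle_val vs (A p - {t})"
        by (rule bv_ge) (use nA t finA allnn in auto)
      also have "\<dots> \<le> efx_bar_val vs (A p)" by (rule bar_ge[OF finA tA])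
      finally have big: "1 - S \<le> efx_bar_val vs (A p)" using vs_n by simp
      define q where "q = (if p = 0 then 1 else 0::nat)"
      have q: "q < n" "q \<noteq> p" unfolding q_def using assms(1) by auto
      have sub: "A q \<subseteq> {..<n}" unfolding A_eq using q(2) p_def
        by (auto simp: less_Suc_eq)
      have "bundle_val vs (A q) \<le> bundle_val vs {..<n}"
        unfolding bundle_val_def by (rule sum_mono2) (use sub vs_nn in auto)
      also have "\<dots> = S" unfolding bundle_val_def S_def using vs_lt by simp
      finally have bq: "bundle_val vs (A q) \<le> S" .
      have m1: "a * (1 - S) \<le> a * efx_bar_val vs (A p)" using big assms(2) by (simp add: mult_left_mono)
      have m2: "a * (3/4) \<le> a * (1 - S)" using S_le assms(2,3) by (intro mult_left_mono) auto
      have "bundle_val vs (A q) < a * efx_bar_val vs (A p)"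
        using bq m1 m2 S_le assms(2) by linarith
      hence "\<not> (a * efx_bar_val vs (A p) \<le> bundle_val vs (A q))" by simp
      then show ?thesis unfolding is_a_EFX_def A_def[symmetric] using q(1) p_lt by blast
    next
      case False
      have Cne: "C \<noteq> {}"
      proof
        assume "C = {}"
        hence tn: "\<tau> = n" unfolding \<tau>_def by simp
        have "inj_on own {..<n}"
        proof (rule inj_onI)
          fix x y assume xy: "x \<in> {..<n}" "y \<in> {..<n}" "own x = own y"
          show "x = y"
          proof (rule ccontr)
            assume "x \<noteq> y"
            then consider "x < y" | "y < x" by linarith
            then show False
            proof cases
              case 1 then have "y \<in> C" unfolding C_def using xy own_f tn by auto
              then show False using \<open>C = {}\<close> by simp
            next
              case 2 then have "x \<in> C" unfolding C_def using xy own_f tn by auto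
              then show False using \<open>C = {}\<close> by simp
            qed
          qed
        qed
        moreover have "own ` {..<n} \<subseteq> {..<n} - {p}" using False own_lt by auto
        ultimately have "card {..<n} \<le> card ({..<n} - {p})"
          by (metis card_inj_on_le finite_Diff finite_lessThan)
        then show False using p_lt by simp
      qed
      hence tdef: "\<tau> = Least (\<lambda>t. t \<in> C)" unfolding \<tau>_def by simp
      obtain c where "c \<in> C" using Cne by blast
      hence tC: "\<tau> \<in> C" unfolding tdef by (rule LeastI)
      have tmin: "\<And>u. u \<in> C \<Longrightarrow> \<tau> \<le> u" unfolding tdef by (rule Least_le)
      from tC obtain s where s: "s < \<tau>" "f s = f \<tau>" "\<tau> < n" unfolding C_def by auto
      define i where "i = f \<tau>"
      have own_s: "own s = i" "own \<tau> = i" using own_f s unfolding i_def by auto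
      have i_lt: "i < n" using own_lt[of \<tau>] own_s s by simp
      have ip: "i \<noteq> p" using False own_s s by auto
      obtain j where j: "j < n" "j \<noteq> i" "j \<noteq> p"
      proof -
        have "card ({..<n} - {i, p}) \<ge> 1"
        proof -
          have "card ({..<n} - {i, p}) = n - card {i,p}" using i_lt p_lt
            by (simp add: card_Diff_subset)
          then show ?thesis using assms(1) ip by simp
        qed
        then obtain j where "j \<in> {..<n} - {i, p}"
          by (metis One_nat_def card.empty ex_in_conv not_one_le_zero)
        then show ?thesis using that by auto
      qed
      have sA: "s \<in> A i" "\<tau> \<in> A i" using own_s s unfolding A_eq by auto
      have "vs ! \<tau> \<le> bundle_val vs (A i - {s})"
        by (rule bv_ge) (use sA s finA allnn in auto)
      also have "\<dots> \<le> efx_bar_val vs (A i)" by (rule bar_ge[OF finA sA(1)])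
      finally have big: "w \<tau> \<le> efx_bar_val vs (A i)" using vs_lt s by (simp add: g_def)
      define B where "B = A j \<inter> {..<\<tau>}"
      have zero: "vs ! t = 0" if "t \<in> A j - B" for t
      proof -
        have "t < Suc n" "own t = j" "\<not> t < \<tau>" using that unfolding A_eq B_def by auto
        moreover have "t \<noteq> \<tau>" using own_s j \<open>own t = j\<close> by auto
        moreover have "t \<noteq> n" using j \<open>own t = j\<close> p_def by auto
        ultimately have "t < n" "\<tau> < t" by auto
        then show ?thesis using vs_lt g_def by simp
      qed
      have bvB: "bundle_val vs (A j) = bundle_val vs B"
        unfolding bundle_val_def
        by (rule sum.mono_neutral_right) (use finA zero B_def in auto)
      have Bsmall: "bundle_val vs B < a * w \<tau>"
      proof (cases "B = {}")
        case True then show ?thesis unfolding bundle_val_def using w_pos assms(2) by simp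
      next
        case False
        then obtain u where u: "u \<in> B" by blast
        have "B = {u}"
        proof (rule ccontr)
          assume "B \<noteq> {u}"
          then obtain u' where u': "u' \<in> B" "u' \<noteq> u" using u by blast
          have ow: "own u = j" "own u' = j" "u < \<tau>" "u' < \<tau>"
            using u u' unfolding B_def A_eq by auto
          have ff: "f u = f u'" using ow own_f s by (metis less_imp_le order.strict_trans)
          have "max u u' \<in> C"
          proof (cases "u < u'")
            case True then show ?thesis unfolding C_def using ow ff s by (auto simp: max_def)
          next
            case False then have "u' < u" using u'(2) by simp
            then show ?thesis unfolding C_def using ow ff s by (auto simp: max_def intro!: exI[of _ u'])
          qed
          moreover have "max u u' < \<tau>" using ow by simp
          ultimately show False using tmin by fastforce
        qed
        moreover have "u < \<tau>" using u B_def by auto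
        ultimately show ?thesis unfolding bundle_val_def using vs_lt s w_lt g_def by simp
      qed
      have "bundle_val vs (A j) < a * efx_bar_val vs (A i)"
      proof -
        have "a * w \<tau> \<le> a * efx_bar_val vs (A i)" using big assms(2) by (simp add: mult_left_mono)
        then show ?thesis using bvB Bsmall by linarith
      qed
      hence "\<not> (a * efx_bar_val vs (A i) \<le> bundle_val vs (A j))" by simp
      then show ?thesis unfolding is_a_EFX_def A_def[symmetric] using j(1) i_lt by blast
    qed
  qed
qed

end
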